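(* Let $k\ge2$, $\lambda>0$, $0<\theta<1$, $a=\lambda^{1/k}$, and $\gamma(u)=a(1+\theta)-u+\frac{u-a\theta}{1+u^k}$, which maps $[a\theta,a]$ into itself and has a unique fixed point $\xi\in(a\theta,a)$. If either $\theta\ge\frac{k-1}{k}$, or $\theta<\frac{k-1}{k}$ and $\lambda<\frac{1}{k-1-k\theta}$, then $\lim_{n\to\infty}\gamma^{(n)}(\xi_0)=\xi$ for every $\xi_0\in[a\theta,a]$, where $\gamma^{(n)}$ denotes the $n$-fold iterate of $\gamma$. *)

theory Defs
  imports "HOL-Analysis.Analysis"
begin

definition gammaMap :: "nat \<Rightarrow> real \<Rightarrow> real \<Rightarrow> real \<Rightarrow> real" where
  "gammaMap k lam th u =
     (let a = root k lam in a * (1 + th) - u + (u - a * th) / (1 + u ^ k))"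

end

theory Submission
  imports Defs
begin

lemma phi_deriv:
  assumes "(u::real) > 0"
  shows "((\<lambda>u. (u - b)/(1+u^k)) has_real_derivative
     ((1+u^k) - (u-b)*(real k*u^(k-1)))/((1+u^k)*(1+u^k))) (at u)"
proof -
  have d1: "((\<lambda>u. u - b) has_real_derivative 1) (at u)"
    using DERIV_diff[OF DERIV_ident DERIV_const[of b]] by simp
  have d2: "((\<lambda>u. 1 + u^k) has_real_derivative real k * u^(k-1)) (at u)"
    using DERIV_add[OF DERIV_const[of 1] DERIV_pow[of k u]] by simp
  have ne: "1 + u^k \<noteq> 0" using assms by (smt (verit) zero_le_power)
  show ?thesis using DERIV_divide[OF d1 d2 ne] by simp
qed

lemma phi_slope:
  fixes k :: nat and a th lam c x y :: real
  assumes a: "a > 0" and ak: "a ^ k = lam" and th: "0 < th"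
    and cpos: "0 < c"
    and hnum: "\<forall>z\<in>{a*th..a}. c \<le> 1 + z^k - (z - a*th)*(real k*z^(k-1))"
    and y: "a*th \<le> y" "y < x" "x \<le> a"
  shows "c/(1+lam)^2 * (x-y) \<le> (x - a*th)/(1+x^k) - (y - a*th)/(1+y^k)
       \<and> (x - a*th)/(1+x^k) - (y - a*th)/(1+y^k) \<le> x - y"
proof -
  define f' where "f' = (\<lambda>u::real. ((1+u^k) - (u-a*th)*(real k*u^(k-1)))/((1+u^k)*(1+u^k)))"
  have y0: "y > 0" using a th y by (smt (verit) mult_pos_pos)
  have "\<And>u. y \<le> u \<Longrightarrow> u \<le> x \<Longrightarrow> ((\<lambda>u. (u - a*th)/(1+u^k)) has_real_derivative f' u) (at u)"
    using y0 phi_deriv unfolding f'_def by force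
  from MVT2[OF y(2) this] obtain z where z: "y < z" "z < x"
    and eq: "(x - a*th)/(1+x^k) - (y - a*th)/(1+y^k) = (x - y) * f' z" by blast
  have z0: "z > 0" using y0 z by simp
  have zin: "z \<in> {a*th..a}" using y z by auto
  define N where "N = 1 + z^k - (z-a*th)*(real k*z^(k-1))"
  define D where "D = (1+z^k)*(1+z^k)"
  have cN: "c \<le> N" using hnum zin unfolding N_def by auto
  have zk0: "0 \<le> z^k" using z0 by simp
  have Nle: "N \<le> 1 + z^k" unfolding N_def using zin z0 by (simp add: mult_nonneg_nonneg)
  have zkl: "z^k \<le> lam" using ak zin z0 power_mono[of z a k] by simp
  have Dle: "D \<le> (1+lam)^2" unfolding D_def power2_eq_square using zk0 zkl
    by (simp add: mult_mono)
  have Dpos: "D > 0" unfolding D_def using zk0 by (simp add: add_pos_nonneg)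
  have f'eq: "f' z = N / D" unfolding f'_def N_def D_def by simp
  have up: "f' z \<le> 1"
  proof -
    have "N / D \<le> (1+z^k)/D" using Nle Dpos by (simp add: divide_right_mono)
    also have "\<dots> = 1/(1+z^k)" unfolding D_def using zk0 by (simp add: add_pos_nonneg)
    also have "\<dots> \<le> 1" using zk0 by simp
    finally show ?thesis using f'eq by simp
  qed
  have lo: "c/(1+lam)^2 \<le> f' z"
  proof -
    have "c/(1+lam)^2 \<le> c / D" using Dle Dpos cpos by (simp add: frac_le)
    also have "\<dots> \<le> N / D" using cN Dpos by (simp add: divide_right_mono)
    finally show ?thesis using f'eq by simp
  qed
  have "c/(1+lam)^2 * (x-y) \<le> f' z * (x-y)" using lo y(2) by (intro mult_right_mono) auto
  moreover have "f' z * (x-y) \<le> 1 * (x-y)" using up y(2) by (intro mult_right_mono) auto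
  ultimately show ?thesis unfolding eq by (simp add: mult.commute)
qed

theorem mainTheorem10:
  fixes k :: nat and lam th :: real
  assumes "k \<ge> 2" and "lam > 0" and "0 < th" and "th < 1"
    and "th \<ge> (real k - 1) / real k \<or>
         (th < (real k - 1) / real k \<and> lam < 1 / (real k - 1 - real k * th))"
  shows "let a = root k lam; \<gamma> = gammaMap k lam th in
           (\<forall>u\<in>{a*th..a}. \<gamma> u \<in> {a*th..a}) \<and>
           (\<exists>!\<xi>. \<xi> \<in> {a*th<..<a} \<and> \<gamma> \<xi> = \<xi>) \<and>
           (\<forall>\<xi>. \<xi> \<in> {a*th<..<a} \<and> \<gamma> \<xi> = \<xi> \<longrightarrow>
              (\<forall>\<xi>0\<in>{a*th..a}. (\<lambda>n. (\<gamma> ^^ n) \<xi>0) \<longlonglongrightarrow> \<xi>))"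
proof -
  define a where "a = root k lam"
  define g where "g = gammaMap k lam th"
  have k0: "k > 0" using assms(1) by simp
  obtain j where kj: "k = Suc j" using k0 gr0_implies_Suc by blast
  have a0: "a > 0" unfolding a_def using real_root_gt_zero[OF k0 assms(2)] .
  have ak: "a ^ k = lam" unfolding a_def using k0 assms(2) by simp
  have gm: "\<And>u. g u = a*(1+th) - u + (u - a*th)/(1+u^k)"
    unfolding g_def a_def gammaMap_def Let_def by simp
  have ath: "a*th < a" "0 < a*th" using a0 assms(3,4) by auto
  define d where "d = real k - 1 - real k * th"
  define c where "c = 1 - lam * max 0 d"
  have cpos: "0 < c"
  proof (cases "d \<le> 0")
    case True then show ?thesis unfolding c_def by simp
  next
    case False
    then have "th < (real k - 1) / real k" using k0 unfolding d_def
      by (simp add: pos_less_divide_eq mult.commute)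
    then have "lam < 1/d" using assms(5) unfolding d_def by auto
    then have "lam * d < 1" using False by (simp add: pos_less_divide_eq)
    then show ?thesis using False unfolding c_def by simp
  qed
  have cle: "c \<le> 1" unfolding c_def using assms(2) by simp
  have hnum: "\<forall>z\<in>{a*th..a}. c \<le> 1 + z^k - (z - a*th)*(real k*z^(k-1))"
  proof
    fix z assume z: "z \<in> {a*th..a}"
    then have z0: "z > 0" using ath by auto
    define w where "w = (1 - real k)*z + real k*a*th"
    have zk: "z^k = z * z^(k-1)" using kj by simp
    have e: "1 + z^k - (z - a*th)*(real k*z^(k-1)) = 1 + z^(k-1) * w"
      unfolding w_def zk by (simp add: algebra_simps)
    have "z^(k-1) * w \<ge> - lam * max 0 d"
    proof (cases "w \<ge> 0")
      case True
      have "0 \<le> z^(k-1)*w" using True z0 by simp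
      moreover have "0 \<le> lam * max 0 d" using assms(2) by simp
      ultimately show ?thesis by linarith
    next
      case False
      have kz: "(real k - 1)*z \<le> (real k - 1)*a" using z k0 by (intro mult_left_mono) auto
      have wl: "w \<ge> - a * d" unfolding w_def d_def using kz
        by (simp add: algebra_simps)
      have "a*d > 0" using wl False by linarith
      then have dpos: "d > 0" using a0 by (simp add: zero_less_mult_iff)
      have p: "z^(k-1) \<le> a^(k-1)" using z z0 by (simp add: power_mono)
      have s1: "z^(k-1) * (- a * d) \<le> z^(k-1) * w" using wl z0 by (intro mult_left_mono) auto
      have s2: "z^(k-1) * (a * d) \<le> a^(k-1) * (a * d)" using p a0 dpos by (intro mult_right_mono) auto
      have "z^(k-1) * w \<ge> - (a^(k-1)*a) * d" using s1 s2 by (simp add: algebra_simps)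
      moreover have "a^(k-1)*a = lam" using ak kj by (simp add: mult.commute)
      ultimately show ?thesis using dpos by simp
    qed
    then show "c \<le> 1 + z^k - (z - a*th)*(real k*z^(k-1))" unfolding e c_def by simp
  qed
  define m where "m = c/(1+lam)^2"
  define L where "L = 1 - m"
  have m0: "0 < m" unfolding m_def using cpos assms(2) by simp
  have m1: "m \<le> 1"
  proof -
    have e: "(1+lam)^2 = 1 + 2*lam + lam*lam" by (simp add: power2_eq_square algebra_simps)
    have "0 \<le> lam*lam" by simp
    then have "1 \<le> (1+lam)^2" using e assms(2) by linarith
    then show ?thesis unfolding m_def using cle by (simp add: divide_le_eq)
  qed
  have L: "0 \<le> L" "L < 1" unfolding L_def using m0 m1 by auto
  have slope: "\<And>x y. a*th \<le> y \<Longrightarrow> y < x \<Longrightarrow> x \<le> a \<Longrightarrow> \<bar>g x - g y\<bar> \<le> L * \<bar>x - y\<bar>"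
  proof -
    fix x y assume xy: "a*th \<le> y" "y < x" "x \<le> a"
    from phi_slope[OF a0 ak assms(3) cpos hnum xy]
    have "m * (x-y) \<le> (x - a*th)/(1+x^k) - (y - a*th)/(1+y^k)"
         "(x - a*th)/(1+x^k) - (y - a*th)/(1+y^k) \<le> x - y" unfolding m_def by auto
    moreover have "g x - g y = ((x - a*th)/(1+x^k) - (y - a*th)/(1+y^k)) - (x - y)"
      unfolding gm by simp
    moreover have "\<bar>x - y\<bar> = x - y" using xy by simp
    moreover have "L * (x - y) = (x - y) - m * (x - y)" unfolding L_def by (simp add: algebra_simps)
    ultimately show "\<bar>g x - g y\<bar> \<le> L * \<bar>x - y\<bar>" by (simp only: abs_le_iff) linarith
  qed
  have contr: "\<And>x y. x \<in> {a*th..a} \<Longrightarrow> y \<in> {a*th..a} \<Longrightarrow> \<bar>g x - g y\<bar> \<le> L * \<bar>x - y\<bar>"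
  proof -
    fix x y assume x: "x \<in> {a*th..a}" and y: "y \<in> {a*th..a}"
    consider "x = y" | "y < x" | "x < y" by linarith
    then show "\<bar>g x - g y\<bar> \<le> L * \<bar>x - y\<bar>"
    proof cases
      case 2 then show ?thesis using slope x y by auto
    next
      case 3 then show ?thesis using slope[of x y] x y by (simp add: abs_minus_commute)
    qed simp
  qed
  have maps: "\<forall>u\<in>{a*th..a}. g u \<in> {a*th..a}"
  proof
    fix u assume u: "u \<in> {a*th..a}"
    then have u0: "u > 0" using ath by auto
    have pk: "0 \<le> u^k" using u0 by simp
    have q0: "0 \<le> (u - a*th)/(1+u^k)" using u pk by simp
    have q1: "(u - a*th)/(1+u^k) \<le> u - a*th" using u pk
      by (simp add: divide_le_eq mult_le_cancel_left1)
    show "g u \<in> {a*th..a}" unfolding gm using u q0 q1 by (auto simp: algebra_simps)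
  qed
  have cont: "continuous_on {a*th..a} (\<lambda>u. g u - u)"
  proof -
    have "continuous_on {a*th..a} (\<lambda>u. a*(1+th) - u + (u - a*th)/(1+u^k) - u)"
    proof (intro continuous_intros ballI)
      fix x assume "x \<in> {a*th..a}"
      then have "0 < x" using ath by auto
      then have "0 < x^k" by simp
      then show "1 + x^k \<noteq> 0" by simp
    qed
    then show ?thesis unfolding gm .
  qed
  have h1: "g (a*th) - a*th > 0" unfolding gm using ath a0 assms(4) by (simp add: algebra_simps)
  have h2: "g a - a < 0"
  proof -
    have "(a - a*th)/(1+lam) < a - a*th" using ath assms(2) by (simp add: divide_less_eq)
    moreover have "a*(1+th) = a + a*th" by (simp add: algebra_simps)
    ultimately show ?thesis unfolding gm ak by linarith
  qed
  have "\<exists>x\<ge>a*th. x \<le> a \<and> g x - x = 0"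
    by (rule IVT2'[of "\<lambda>u. g u - u" a 0 "a*th"]) (use h1 h2 ath cont in \<open>auto simp: less_imp_le\<close>)
  then obtain \<xi> where xi: "a*th \<le> \<xi>" "\<xi> \<le> a" "g \<xi> - \<xi> = 0" by blast
  have xi': "\<xi> \<in> {a*th<..<a}" using xi h1 h2 by (cases "\<xi> = a*th"; cases "\<xi> = a") auto
  have uniq: "\<And>\<eta>. \<eta> \<in> {a*th..a} \<Longrightarrow> g \<eta> = \<eta> \<Longrightarrow> \<eta> = \<xi>"
  proof -
    fix \<eta> assume e: "\<eta> \<in> {a*th..a}" "g \<eta> = \<eta>"
    have "\<bar>\<eta> - \<xi>\<bar> \<le> L * \<bar>\<eta> - \<xi>\<bar>" using contr[OF e(1), of \<xi>] e xi by auto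
    then have "\<bar>\<eta> - \<xi>\<bar> * (1 - L) \<le> 0" by (simp add: algebra_simps)
    moreover have "1 - L > 0" using L by simp
    ultimately have "\<bar>\<eta> - \<xi>\<bar> \<le> 0" by (simp add: mult_le_0_iff)
    then show "\<eta> = \<xi>" by simp
  qed
  have conv: "\<forall>x0\<in>{a*th..a}. (\<lambda>n. (g ^^ n) x0) \<longlonglongrightarrow> \<xi>"
  proof
    fix x0 assume x0: "x0 \<in> {a*th..a}"
    have it: "(g ^^ n) x0 \<in> {a*th..a} \<and> \<bar>(g ^^ n) x0 - \<xi>\<bar> \<le> L^n * \<bar>x0 - \<xi>\<bar>" for n
    proof (induction n)
      case 0 then show ?case using x0 by simp
    next
      case (Suc n)
      have "\<bar>g ((g ^^ n) x0) - g \<xi>\<bar> \<le> L * \<bar>(g ^^ n) x0 - \<xi>\<bar>"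
        by (rule contr) (use Suc xi in auto)
      also have "\<dots> \<le> L * (L^n * \<bar>x0 - \<xi>\<bar>)" using Suc L by (simp add: mult_left_mono)
      finally show ?case using Suc maps xi by simp
    qed
    have p0: "(\<lambda>n. L^n) \<longlonglongrightarrow> 0" using LIMSEQ_realpow_zero[OF L] .
    have t0: "(\<lambda>n. L^n * \<bar>x0 - \<xi>\<bar>) \<longlonglongrightarrow> 0 * \<bar>x0 - \<xi>\<bar>"
      using tendsto_mult[OF p0 tendsto_const] .
    have ev: "eventually (\<lambda>n. norm ((g ^^ n) x0 - \<xi>) \<le> L^n * \<bar>x0 - \<xi>\<bar>) sequentially"
      unfolding real_norm_def using it by (intro always_eventually allI) blast
    have "(\<lambda>n. (g ^^ n) x0 - \<xi>) \<longlonglongrightarrow> 0"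
      using Lim_null_comparison[OF ev] t0 by simp
    then show "(\<lambda>n. (g ^^ n) x0) \<longlonglongrightarrow> \<xi>" by (simp add: LIM_zero_iff)
  qed
  show ?thesis unfolding Let_def a_def[symmetric] g_def[symmetric]
  proof (intro conjI)
    show "\<forall>u\<in>{a*th..a}. g u \<in> {a*th..a}" by (rule maps)
    have gx: "g \<xi> = \<xi>" using xi by simp
    show "\<exists>!\<xi>. \<xi> \<in> {a*th<..<a} \<and> g \<xi> = \<xi>"
    proof (rule ex1I[of _ \<xi>])
      show "\<xi> \<in> {a*th<..<a} \<and> g \<xi> = \<xi>" using xi' gx by simp
      fix \<eta> assume "\<eta> \<in> {a*th<..<a} \<and> g \<eta> = \<eta>"
      then show "\<eta> = \<xi>" using uniq by auto
    qed
    show "\<forall>\<eta>. \<eta> \<in> {a*th<..<a} \<and> g \<eta> = \<eta> \<longrightarrow>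
              (\<forall>\<xi>0\<in>{a*th..a}. (\<lambda>n. (g ^^ n) \<xi>0) \<longlonglongrightarrow> \<eta>)"
    proof (intro allI impI)
      fix \<eta> assume h: "\<eta> \<in> {a*th<..<a} \<and> g \<eta> = \<eta>"
      then have "\<eta> = \<xi>" using uniq by auto
      then show "\<forall>\<xi>0\<in>{a*th..a}. (\<lambda>n. (g ^^ n) \<xi>0) \<longlonglongrightarrow> \<eta>" using conv by simp
    qed
  qed
qed

end
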